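(* Fix $c>0$, $0\le\alpha\le1$, put $t=\lfloor cn^\alpha\rfloor$ and assume $1\le t\le \frac{n+1}{2}$. Let $M$ be a $t$-matching in $K_{n+1}$ and let $P_M$ be as in the context. Then the largest eigenvalue of $P_M$ is $$\mu_m=\frac{3n-7+\sqrt{n^2+6n+9-16t}}{4(n-1)},$$ and, as $n\to\infty$, $1-\mu_m=\Theta(n^{\alpha-2})$ (indeed $1-\mu_m=2cn^{\alpha-2}(1+o(1))$ when $t\sim cn^\alpha$), so that $\frac{1}{1-\mu_m}$, which governs the expected hitting time of $M$ for the simple random walk on edges, is of order $n^{2-\alpha}$.
   Context: $K_{n+1}$ is the complete graph on vertex set $V$, $|V|=n+1$, edge set $E$. A $t$-matching is a set of $t$ pairwise vertex-disjoint edges. $P$ is the matrix on $\mathbb{C}^E$ with $P_{e,f}=\frac{1}{2(n-1)}$ if $e\ne f$ share an endpoint and $0$ otherwise (transition matrix of the simple random walk on edges), and $P_M$ is the principal submatrix of $P$ obtained by deleting the rows and columns indexed by edges of $M$. *)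

theory Defs
  imports "HOL-Analysis.Analysis" "HOL-Library.Landau_Symbols"
begin

definition Kedges :: "nat \<Rightarrow> nat set set" where
  "Kedges n = {e. \<exists>u v. u \<le> n \<and> v \<le> n \<and> u \<noteq> v \<and> e = {u, v}}"

definition is_matching :: "nat \<Rightarrow> nat \<Rightarrow> nat set set \<Rightarrow> bool" where
  "is_matching n t M \<longleftrightarrow> M \<subseteq> Kedges n \<and> card M = t \<and>
     (\<forall>e\<in>M. \<forall>f\<in>M. e \<noteq> f \<longrightarrow> e \<inter> f = {})"

text \<open>Transition matrix of the simple random walk on edges of K_{n+1}.\<close>
definition Pmat :: "nat \<Rightarrow> nat set \<Rightarrow> nat set \<Rightarrow> complex" where
  "Pmat n e f = (if e \<noteq> f \<and> e \<inter> f \<noteq> {} then 1 / (2 * (of_nat n - 1)) else 0)"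

definition eigenvalue_on :: "'i set \<Rightarrow> ('i \<Rightarrow> 'i \<Rightarrow> complex) \<Rightarrow> complex \<Rightarrow> bool" where
  "eigenvalue_on S A lam \<longleftrightarrow> (\<exists>x. (\<exists>e\<in>S. x e \<noteq> 0) \<and>
     (\<forall>e\<in>S. (\<Sum>f\<in>S. A e f * x f) = lam * x e))"

definition largest_eigenvalue_on :: "'i set \<Rightarrow> ('i \<Rightarrow> 'i \<Rightarrow> complex) \<Rightarrow> real \<Rightarrow> bool" where
  "largest_eigenvalue_on S A \<mu> \<longleftrightarrow> eigenvalue_on S A (complex_of_real \<mu>) \<and>
     (\<forall>lam. eigenvalue_on S A lam \<longrightarrow> lam \<in> \<real> \<and> Re lam \<le> \<mu>)"

definition mu_m :: "nat \<Rightarrow> nat \<Rightarrow> real" where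
  "mu_m n t = (3 * real n - 7 + sqrt (real n ^ 2 + 6 * real n + 9 - 16 * real t)) / (4 * (real n - 1))"

end

theory Submission
  imports Defs
begin

lemma eig_real:
  fixes a :: "'i \<Rightarrow> 'i \<Rightarrow> real"
  assumes fin: "finite S" and sym: "\<And>e f. a e f = a f e"
    and ev: "eigenvalue_on S (\<lambda>e f. complex_of_real (a e f)) lam"
  shows "lam \<in> \<real>"
proof -
  from ev obtain x where nz: "\<exists>e\<in>S. x e \<noteq> 0"
    and eq: "\<And>e. e\<in>S \<Longrightarrow> (\<Sum>f\<in>S. complex_of_real (a e f) * x f) = lam * x e"
    unfolding eigenvalue_on_def by blast
  define Q where "Q = (\<Sum>e\<in>S. cnj (x e) * (\<Sum>f\<in>S. complex_of_real (a e f) * x f))"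
  define N where "N = (\<Sum>e\<in>S. cnj (x e) * x e)"
  have "Q = (\<Sum>e\<in>S. cnj (x e) * (lam * x e))" unfolding Q_def
    by (rule sum.cong) (simp_all add: eq)
  hence QN: "Q = lam * N" by (simp add: N_def sum_distrib_left mult_ac)
  have "cnj Q = (\<Sum>e\<in>S. x e * (\<Sum>f\<in>S. complex_of_real (a e f) * cnj (x f)))"
    unfolding Q_def by (simp add: cnj_sum)
  also have "\<dots> = (\<Sum>e\<in>S. \<Sum>f\<in>S. complex_of_real (a e f) * cnj (x f) * x e)"
    by (simp add: sum_distrib_left mult_ac)
  also have "\<dots> = (\<Sum>f\<in>S. \<Sum>e\<in>S. complex_of_real (a e f) * cnj (x f) * x e)"
    by (rule sum.swap)
  also have "\<dots> = Q" unfolding Q_def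
    by (simp add: sum_distrib_left mult_ac sym)
  finally have cQ: "cnj Q = Q" .
  have Nr: "N = complex_of_real (\<Sum>e\<in>S. (cmod (x e))^2)"
    unfolding N_def of_real_sum by (rule sum.cong) (simp_all only: complex_norm_square mult.commute)
  obtain e0 where e0: "e0 \<in> S" "x e0 \<noteq> 0" using nz by blast
  have "(\<Sum>e\<in>S. (cmod (x e))^2) \<ge> (cmod (x e0))^2"
    by (rule member_le_sum) (use fin e0 in auto)
  moreover have "(cmod (x e0))^2 > 0" using e0 by simp
  ultimately have "(\<Sum>e\<in>S. (cmod (x e))^2) > 0" by linarith
  hence "N \<noteq> 0" unfolding Nr by (metis of_real_eq_0_iff less_irrefl)
  have "cnj N = N" unfolding Nr by simp
  have "lam = Q / N" using QN \<open>N \<noteq> 0\<close> by simp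
  hence "cnj lam = lam" using cQ \<open>cnj N = N\<close> by simp
  thus ?thesis by (simp add: Reals_cnj_iff)
qed

lemma eig_bound:
  fixes a :: "'i \<Rightarrow> 'i \<Rightarrow> real" and v :: "'i \<Rightarrow> real"
  assumes fin: "finite S" and nn: "\<And>e f. a e f \<ge> 0"
    and vpos: "\<And>e. e \<in> S \<Longrightarrow> v e > 0"
    and veq: "\<And>e. e \<in> S \<Longrightarrow> (\<Sum>f\<in>S. a e f * v f) = \<mu> * v e"
    and ev: "eigenvalue_on S (\<lambda>e f. complex_of_real (a e f)) lam"
  shows "cmod lam \<le> \<mu>"
proof -
  from ev obtain x where nz: "\<exists>e\<in>S. x e \<noteq> 0"
    and eq: "\<And>e. e\<in>S \<Longrightarrow> (\<Sum>f\<in>S. complex_of_real (a e f) * x f) = lam * x e"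
    unfolding eigenvalue_on_def by blast
  have ne: "S \<noteq> {}" using nz by auto
  define r where "r = Max ((\<lambda>e. cmod (x e) / v e) ` S)"
  have "r \<in> (\<lambda>e. cmod (x e) / v e) ` S" unfolding r_def
    by (rule Max_in) (use fin ne in auto)
  then obtain e0 where e0: "e0 \<in> S" "r = cmod (x e0) / v e0" by blast
  have rge: "cmod (x e) \<le> r * v e" if "e \<in> S" for e
  proof -
    have "cmod (x e) / v e \<le> r" unfolding r_def using fin that by (intro Max_ge) auto
    thus ?thesis using vpos[OF that] by (simp add: divide_le_eq)
  qed
  obtain e1 where e1: "e1 \<in> S" "x e1 \<noteq> 0" using nz by blast
  have "0 < cmod (x e1) / v e1" using e1 vpos by simp
  also have "\<dots> \<le> r" unfolding r_def using fin e1 by (intro Max_ge) auto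
  finally have rpos: "r > 0" .
  have x0: "cmod (x e0) > 0" using e0 rpos vpos[OF e0(1)] by (simp add: zero_less_divide_iff)
  have "cmod lam * cmod (x e0) = cmod (\<Sum>f\<in>S. complex_of_real (a e0 f) * x f)"
    using eq[OF e0(1)] by (simp add: norm_mult)
  also have "\<dots> \<le> (\<Sum>f\<in>S. cmod (complex_of_real (a e0 f) * x f))" by (rule norm_sum)
  also have "\<dots> = (\<Sum>f\<in>S. a e0 f * cmod (x f))" using nn by (simp add: norm_mult)
  also have "\<dots> \<le> (\<Sum>f\<in>S. a e0 f * (r * v f))"
    by (rule sum_mono) (use rge nn in \<open>auto intro: mult_left_mono\<close>)
  also have "\<dots> = r * (\<Sum>f\<in>S. a e0 f * v f)" by (simp add: sum_distrib_left mult_ac)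
  also have "\<dots> = r * (\<mu> * v e0)" using veq[OF e0(1)] by simp
  also have "\<dots> = \<mu> * cmod (x e0)" using e0 vpos[OF e0(1)] by simp
  finally show ?thesis using x0 by simp
qed

lemma Kedges_sub: "Kedges n \<subseteq> Pow {0..n}"
  unfolding Kedges_def by auto

lemma finite_Kedges: "finite (Kedges n)"
  by (rule finite_subset[OF Kedges_sub]) auto

lemma nbr_set:
  assumes "x \<le> n" "y \<le> n" "x \<noteq> y"
  shows "{f \<in> Kedges n - M. {x,y} \<noteq> f \<and> {x,y} \<inter> f \<noteq> {}} =
     (\<lambda>z. {x,z}) ` {z. z \<le> n \<and> z \<noteq> x \<and> z \<noteq> y \<and> {x,z} \<notin> M} \<union>
     (\<lambda>z. {y,z}) ` {z. z \<le> n \<and> z \<noteq> x \<and> z \<noteq> y \<and> {y,z} \<notin> M}"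
  (is "?L = ?A \<union> ?B")
proof
  show "?L \<subseteq> ?A \<union> ?B"
  proof
    fix f assume f: "f \<in> ?L"
    then obtain u v where uv: "u \<le> n" "v \<le> n" "u \<noteq> v" "f = {u,v}" "f \<notin> M"
      unfolding Kedges_def by auto
    from f uv have ne: "{x,y} \<noteq> {u,v}" "{x,y} \<inter> {u,v} \<noteq> {}" by auto
    show "f \<in> ?A \<union> ?B"
    proof (cases "u = x \<or> u = y")
      case True
      then show ?thesis
      proof
        assume "u = x" thus ?thesis using uv ne by (auto simp: insert_commute)
      next
        assume "u = y" thus ?thesis using uv ne by (auto simp: insert_commute)
      qed
    next
      case False
      hence "v = x \<or> v = y" using ne by auto
      thus ?thesis
      proof
        assume "v = x" thus ?thesis using uv ne False by (auto simp: insert_commute)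
      next
        assume "v = y" thus ?thesis using uv ne False by (auto simp: insert_commute)
      qed
    qed
  qed
next
  show "?A \<union> ?B \<subseteq> ?L" using assms unfolding Kedges_def by (auto simp: doubleton_eq_iff)
qed

lemma nbr_sum:
  fixes g :: "nat set \<Rightarrow> real"
  assumes "x \<le> n" "y \<le> n" "x \<noteq> y"
  shows "(\<Sum>f\<in>Kedges n - M. (if {x,y} \<noteq> f \<and> {x,y} \<inter> f \<noteq> {} then c else 0) * g f) =
     c * ((\<Sum>z\<in>{z. z \<le> n \<and> z \<noteq> x \<and> z \<noteq> y \<and> {x,z} \<notin> M}. g {x,z}) +
     (\<Sum>z\<in>{z. z \<le> n \<and> z \<noteq> x \<and> z \<noteq> y \<and> {y,z} \<notin> M}. g {y,z}))"
proof -
  let ?Nx = "{z. z \<le> n \<and> z \<noteq> x \<and> z \<noteq> y \<and> {x,z} \<notin> M}"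
  let ?Ny = "{z. z \<le> n \<and> z \<noteq> x \<and> z \<noteq> y \<and> {y,z} \<notin> M}"
  have fin: "finite (Kedges n - M)" using finite_Kedges by auto
  have "(\<Sum>f\<in>Kedges n - M. (if {x,y} \<noteq> f \<and> {x,y} \<inter> f \<noteq> {} then c else 0) * g f)
     = (\<Sum>f\<in>{f \<in> Kedges n - M. {x,y} \<noteq> f \<and> {x,y} \<inter> f \<noteq> {}}. c * g f)"
    by (simp only: sum.inter_filter[OF fin]) (rule sum.cong, auto)
  also have "\<dots> = (\<Sum>f\<in>(\<lambda>z. {x,z}) ` ?Nx \<union> (\<lambda>z. {y,z}) ` ?Ny. c * g f)"
    by (simp only: nbr_set[OF assms])
  also have "\<dots> = (\<Sum>f\<in>(\<lambda>z. {x,z}) ` ?Nx. c * g f) + (\<Sum>f\<in>(\<lambda>z. {y,z}) ` ?Ny. c * g f)"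
    by (rule sum.union_disjoint) (use assms in \<open>auto simp: doubleton_eq_iff\<close>)
  also have "(\<Sum>f\<in>(\<lambda>z. {x,z}) ` ?Nx. c * g f) = (\<Sum>z\<in>?Nx. c * g {x,z})"
    by (subst sum.reindex) (auto simp: inj_on_def doubleton_eq_iff)
  also have "(\<Sum>f\<in>(\<lambda>z. {y,z}) ` ?Ny. c * g f) = (\<Sum>z\<in>?Ny. c * g {y,z})"
    by (subst sum.reindex) (auto simp: inj_on_def doubleton_eq_iff)
  finally show ?thesis by (simp add: sum_distrib_left distrib_left)
qed

lemma Kedges_mem: "f \<in> Kedges n \<Longrightarrow> \<exists>u v. u \<le> n \<and> v \<le> n \<and> u \<noteq> v \<and> f = {u,v}"
  unfolding Kedges_def by blast

lemma Px_sub: "M \<subseteq> Kedges n \<Longrightarrow> {z. {x,z} \<in> M} \<subseteq> {0..n}"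
proof
  fix z assume M: "M \<subseteq> Kedges n" and "z \<in> {z. {x,z} \<in> M}"
  then obtain u v where uv: "u \<le> n" "v \<le> n" "{x,z} = {u,v}" using Kedges_mem by blast
  have "z \<in> {u,v}" using uv(3) by blast
  thus "z \<in> {0..n}" using uv by auto
qed

lemma Kedges_ne: "{x,a} \<in> Kedges n \<Longrightarrow> a \<noteq> x"
proof
  assume "{x,a} \<in> Kedges n" "a = x"
  then obtain u v where "u \<noteq> v" "{x} = {u,v}" using Kedges_mem by fastforce
  thus False by (metis insertCI singletonD)
qed

lemma Px_card:
  assumes "M \<subseteq> Kedges n" "\<forall>e\<in>M. \<forall>f\<in>M. e \<noteq> f \<longrightarrow> e \<inter> f = {}"
  shows "card {z. {x,z} \<in> M} \<le> 1"
proof -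
  have "\<forall>a\<in>{z. {x,z} \<in> M}. \<forall>b\<in>{z. {x,z} \<in> M}. a = b"
  proof (intro ballI)
    fix a b assume "a \<in> {z. {x,z} \<in> M}" "b \<in> {z. {x,z} \<in> M}"
    hence ab: "{x,a} \<in> M" "{x,b} \<in> M" by auto
    have "{x,a} = {x,b}"
    proof (rule ccontr)
      assume "{x,a} \<noteq> {x,b}"
      hence "{x,a} \<inter> {x,b} = {}" using assms(2)[rule_format, OF ab(1) ab(2)] by simp
      thus False by simp
    qed
    moreover have "a \<noteq> x" using ab assms(1) Kedges_ne by blast
    ultimately show "a = b" by (metis doubleton_eq_iff)
  qed
  moreover have "finite {z. {x,z} \<in> M}" using Px_sub[OF assms(1)] finite_subset by blast
  ultimately show ?thesis using card_le_Suc0_iff_eq[of "{z. {x,z} \<in> M}"] by simp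
qed

lemma Px_W:
  assumes "M \<subseteq> Kedges n"
  shows "x \<in> \<Union>M \<longleftrightarrow> {z. {x,z} \<in> M} \<noteq> {}"
proof
  assume "x \<in> \<Union>M"
  then obtain f where f: "f \<in> M" "x \<in> f" by auto
  then obtain u v where uv: "f = {u,v}" using assms Kedges_mem by blast
  show "{z. {x,z} \<in> M} \<noteq> {}"
  proof (cases "x = u")
    case True thus ?thesis using f uv by auto
  next
    case False hence "x = v" using f uv by blast
    hence "{x,u} \<in> M" using f uv by (simp add: insert_commute)
    thus ?thesis by blast
  qed
next
  assume "{z. {x,z} \<in> M} \<noteq> {}" thus "x \<in> \<Union>M" by auto
qed

lemma Px_inW: "{z. {x,z} \<in> M} \<subseteq> \<Union>M" by auto

lemma side_sum:
  fixes p :: "nat \<Rightarrow> real"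
  assumes M: "M \<subseteq> Kedges n" and e: "x \<le> n" "y \<le> n" "x \<noteq> y" "{x,y} \<notin> M"
  shows "(\<Sum>z\<in>{z. z \<le> n \<and> z \<noteq> x \<and> z \<noteq> y \<and> {x,z} \<notin> M}. p x + p z) =
    (real n - 1 - real (card {z. {x,z} \<in> M})) * p x + (\<Sum>z\<in>{0..n}. p z) - p x - p y
      - (\<Sum>z\<in>{z. {x,z} \<in> M}. p z)"
proof -
  let ?P = "{z. {x,z} \<in> M}"
  have Ps: "?P \<subseteq> {0..n}" by (rule Px_sub[OF M])
  have finP: "finite ?P" using Ps finite_subset by blast
  have xP: "x \<notin> ?P"
  proof
    assume "x \<in> ?P" hence "{x} \<in> Kedges n" using M by auto
    thus False unfolding Kedges_def by (auto simp: doubleton_eq_iff)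
  qed
  have yP: "y \<notin> ?P" using e(4) by auto
  have Nx: "{z. z \<le> n \<and> z \<noteq> x \<and> z \<noteq> y \<and> {x,z} \<notin> M} = {0..n} - ({x,y} \<union> ?P)" by auto
  have sub: "{x,y} \<union> ?P \<subseteq> {0..n}" using Ps e by auto
  have fin2: "finite ({x,y} \<union> ?P)" using finP by auto
  have cardU: "card ({x,y} \<union> ?P) = 2 + card ?P"
    using card_Un_disjoint[of "{x,y}" ?P] finP xP yP e(3) by auto
  have card: "real (card ({0..n} - ({x,y} \<union> ?P))) = real n + 1 - 2 - real (card ?P)"
    using card_Diff_subset[OF fin2 sub] cardU card_mono[OF _ sub] by (simp add: of_nat_diff)
  have sumU: "(\<Sum>z\<in>{x,y} \<union> ?P. p z) = p x + p y + (\<Sum>z\<in>?P. p z)"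
    using sum.union_disjoint[of "{x,y}" ?P p] finP xP yP e(3) by auto
  have "(\<Sum>z\<in>{0..n} - ({x,y} \<union> ?P). p x + p z) =
        real (card ({0..n} - ({x,y} \<union> ?P))) * p x + (\<Sum>z\<in>{0..n} - ({x,y} \<union> ?P). p z)"
    by (simp add: sum.distrib)
  also have "(\<Sum>z\<in>{0..n} - ({x,y} \<union> ?P). p z) = (\<Sum>z\<in>{0..n}. p z) - (\<Sum>z\<in>{x,y} \<union> ?P. p z)"
    by (rule sum_diff) (use sub fin2 in auto)
  finally show ?thesis unfolding Nx card sumU by (simp add: algebra_simps)
qed

lemma alg:
  fixes n t s cx cy :: real
  assumes sD: "s^2 = n^2 + 6*n + 9 - 16*t" and n: "n > 1"
    and cx: "cx = 0 \<or> cx = 1" and cy: "cy = 0 \<or> cy = 1"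
  defines "\<alpha> \<equiv> (s - n - 3 + 4*t)/2" and "\<beta> \<equiv> 2*t"
  defines "px \<equiv> (if cx = 1 then \<alpha> else \<beta>)" and "py \<equiv> (if cy = 1 then \<alpha> else \<beta>)"
  defines "P \<equiv> \<alpha> * (2*t) + \<beta> * (n + 1 - 2*t)"
  shows "(1/(2*(n-1))) * (((n-1-cx)*px + P - px - py - \<alpha>*cx) + ((n-1-cy)*py + P - py - px - \<alpha>*cy))
     = (3*n - 7 + s)/(4*(n-1)) * (px+py)"
proof -
  have n1: "n - 1 \<noteq> 0" using n by simp
  have key: "((n-1-cx)*px + P - px - py - \<alpha>*cx) + ((n-1-cy)*py + P - py - px - \<alpha>*cy)
     = (3*n - 7 + s)/2 * (px+py)"
    using cx cy unfolding px_def py_def P_def \<alpha>_def \<beta>_def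
    apply (elim disjE)
    subgoal by (simp add: algebra_simps)
    subgoal using sD by (simp add: algebra_simps power2_eq_square divide_simps)
    subgoal using sD by (simp add: algebra_simps power2_eq_square divide_simps)
    subgoal using sD by (simp add: algebra_simps power2_eq_square divide_simps)
    done
  show ?thesis unfolding key using n1 by (simp add: field_simps)
qed

lemma D_nonneg:
  fixes n t :: real
  assumes "2*t \<le> n+1"
  shows "n^2 + 6*n + 9 - 16*t \<ge> 0"
proof -
  have "n^2 + 6*n + 9 - 16*t \<ge> (n-1)^2" using assms by (simp add: power2_eq_square algebra_simps)
  thus ?thesis by (smt (verit) zero_le_power2)
qed

lemma alpha_pos:
  fixes n t :: real
  assumes "n \<ge> 2" "t \<ge> 1" "2*t \<le> n+1"
  shows "sqrt (n^2 + 6*n + 9 - 16*t) - n - 3 + 4*t > 0"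
proof (cases "n + 3 - 4*t < 0")
  case True
  have "sqrt (n^2 + 6*n + 9 - 16*t) \<ge> 0" using D_nonneg[OF assms(3)] by simp
  thus ?thesis using True by linarith
next
  case False
  hence "2*t < n+1" using assms by linarith
  hence "8*t*(n+1-2*t) > 0" using assms by simp
  moreover have "n^2 + 6*n + 9 - 16*t - (n+3-4*t)^2 = 8*t*(n+1-2*t)"
    by (simp add: power2_eq_square algebra_simps)
  ultimately have "(n+3-4*t)^2 < n^2 + 6*n + 9 - 16*t" by linarith
  hence "sqrt ((n+3-4*t)^2) < sqrt (n^2 + 6*n + 9 - 16*t)" by (rule real_sqrt_less_mono)
  thus ?thesis using False by simp
qed

lemma eigen_main:
  assumes n2: "2 \<le> n" and t1: "1 \<le> t" and t2: "2 * real t \<le> real n + 1"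
    and M: "is_matching n t M"
  shows "largest_eigenvalue_on (Kedges n - M) (Pmat n) (mu_m n t)"
proof -
  let ?S = "Kedges n - M"
  define W where "W = \<Union>M"
  have Msub: "M \<subseteq> Kedges n" and cM: "card M = t"
    and Mdis: "\<forall>e\<in>M. \<forall>f\<in>M. e \<noteq> f \<longrightarrow> e \<inter> f = {}"
    using M unfolding is_matching_def by auto
  have finS: "finite ?S" using finite_Kedges by auto
  have finM: "finite M" using Msub finite_Kedges finite_subset by blast
  have card2: "card f = 2" if "f \<in> M" for f
  proof -
    have "f \<in> Kedges n" using that Msub by (rule subsetD[rotated])
    then obtain u v where "u \<noteq> v" "f = {u,v}" using Kedges_mem[of f n] by blast
    thus ?thesis by simp
  qed
  have cardW: "card W = 2 * t"
  proof -
    have "card W = sum card M" unfolding W_def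
    proof (rule card_Union_disjoint)
      show "pairwise disjnt M" using Mdis unfolding pairwise_def disjnt_def by blast
      show "\<And>A. A \<in> M \<Longrightarrow> finite A" using card2 by (metis card.infinite zero_neq_numeral)
    qed
    also have "\<dots> = 2 * t" using card2 cM by simp
    finally show ?thesis .
  qed
  have Wsub: "W \<subseteq> {0..n}" unfolding W_def using Msub Kedges_sub by blast
  define D where "D = real n ^ 2 + 6 * real n + 9 - 16 * real t"
  define s where "s = sqrt D"
  have D0: "D \<ge> 0" unfolding D_def using D_nonneg[of "real t" "real n"] t2 by simp
  have sD: "s^2 = real n^2 + 6*real n + 9 - 16*real t" unfolding s_def using D0 D_def by simp
  define \<alpha> where "\<alpha> = (s - real n - 3 + 4 * real t)/2"
  define \<beta> where "\<beta> = 2 * real t"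
  have apos: "\<alpha> > 0" unfolding \<alpha>_def s_def D_def using alpha_pos[of "real n" "real t"] n2 t1 t2 by simp
  have bpos: "\<beta> > 0" unfolding \<beta>_def using t1 by simp
  define p where "p z = (if z \<in> W then \<alpha> else \<beta>)" for z
  have ppos: "p z > 0" for z unfolding p_def using apos bpos by simp
  define a where "a e f = (if e \<noteq> f \<and> e \<inter> f \<noteq> {} then 1 / (2 * (real n - 1)) else 0)" for e f :: "nat set"
  have Pa: "Pmat n = (\<lambda>e f. complex_of_real (a e f))"
    unfolding Pmat_def a_def by (auto intro!: ext)
  define \<mu> where "\<mu> = mu_m n t"
  have mu_eq: "\<mu> = (3 * real n - 7 + s) / (4 * (real n - 1))" unfolding \<mu>_def mu_m_def s_def D_def by simp
  define v where "v e = sum p e" for e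
  have vpos: "v e > 0" if eS: "e \<in> ?S" for e
  proof -
    obtain x y where "e = {x,y}" "x \<noteq> y" using Kedges_mem[OF DiffD1[OF eS]] by blast
    thus ?thesis unfolding v_def using ppos[of x] ppos[of y] by simp
  qed
  have psum: "(\<Sum>z\<in>{0..n}. p z) = \<alpha> * (2 * real t) + \<beta> * (real n + 1 - 2 * real t)"
  proof -
    have "(\<Sum>z\<in>{0..n}. p z) = (\<Sum>z\<in>W. p z) + (\<Sum>z\<in>{0..n} - W. p z)"
      using Wsub by (metis finite_atLeastAtMost sum.subset_diff add.commute)
    also have "(\<Sum>z\<in>W. p z) = \<alpha> * real (card W)" unfolding p_def by simp
    also have "(\<Sum>z\<in>{0..n} - W. p z) = \<beta> * real (card ({0..n} - W))" unfolding p_def by simp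
    also have "real (card ({0..n} - W)) = real n + 1 - real (card W)"
      using card_Diff_subset[OF finite_subset[OF Wsub] Wsub] card_mono[OF _ Wsub] by (simp add: of_nat_diff)
    finally show ?thesis using cardW by simp
  qed
  have side: "(\<Sum>z\<in>{z. z \<le> n \<and> z \<noteq> x \<and> z \<noteq> y \<and> {x,z} \<notin> M}. p x + p z) =
      (real n - 1 - cx) * px + P - px - py - \<alpha> * cx"
    if "x \<le> n" "y \<le> n" "x \<noteq> y" "{x,y} \<notin> M" "cx = real (card {z. {x,z} \<in> M})" "px = p x" "py = p y"
       "P = \<alpha> * (2 * real t) + \<beta> * (real n + 1 - 2 * real t)" for x y cx px py P
  proof -
    have "(\<Sum>z\<in>{z. {x,z} \<in> M}. p z) = (\<Sum>z\<in>{z. {x,z} \<in> M}. \<alpha>)"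
      using Px_inW[of x M] unfolding p_def W_def by (intro sum.cong) auto
    also have "\<dots> = \<alpha> * cx" using that(5) by simp
    finally show ?thesis using side_sum[OF Msub that(1-4), of p] that psum by simp
  qed
  have cx01: "real (card {z. {x,z} \<in> M}) = 0 \<or> real (card {z. {x,z} \<in> M}) = 1" for x
    using Px_card[OF Msub Mdis, of x] by auto
  have px: "p x = (if real (card {z. {x,z} \<in> M}) = 1 then \<alpha> else \<beta>)" for x
  proof -
    have fin: "finite {z. {x,z} \<in> M}" using Px_sub[OF Msub] finite_subset by blast
    have "x \<in> W \<longleftrightarrow> card {z. {x,z} \<in> M} \<noteq> 0" unfolding W_def using Px_W[OF Msub] fin by simp
    thus ?thesis unfolding p_def using Px_card[OF Msub Mdis, of x] by auto
  qed
  have veq: "(\<Sum>f\<in>?S. a e f * v f) = \<mu> * v e" if e: "e \<in> ?S" for e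
  proof -
    obtain x y where xy: "x \<le> n" "y \<le> n" "x \<noteq> y" "e = {x,y}" using Kedges_mem[OF DiffD1[OF e]] by blast
    have eM: "{x,y} \<notin> M" using e xy by simp
    have eM': "{y,x} \<notin> M" using eM by (simp add: insert_commute)
    have "(\<Sum>f\<in>?S. a e f * v f) = 1 / (2 * (real n - 1)) *
      ((\<Sum>z\<in>{z. z \<le> n \<and> z \<noteq> x \<and> z \<noteq> y \<and> {x,z} \<notin> M}. v {x,z}) +
       (\<Sum>z\<in>{z. z \<le> n \<and> z \<noteq> x \<and> z \<noteq> y \<and> {y,z} \<notin> M}. v {y,z}))"
      unfolding a_def xy(4) by (rule nbr_sum[OF xy(1-3)])
    also have "(\<Sum>z\<in>{z. z \<le> n \<and> z \<noteq> x \<and> z \<noteq> y \<and> {x,z} \<notin> M}. v {x,z})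
       = (\<Sum>z\<in>{z. z \<le> n \<and> z \<noteq> x \<and> z \<noteq> y \<and> {x,z} \<notin> M}. p x + p z)"
      unfolding v_def by (intro sum.cong) auto
    also have "(\<Sum>z\<in>{z. z \<le> n \<and> z \<noteq> x \<and> z \<noteq> y \<and> {y,z} \<notin> M}. v {y,z})
       = (\<Sum>z\<in>{z. z \<le> n \<and> z \<noteq> y \<and> z \<noteq> x \<and> {y,z} \<notin> M}. p y + p z)"
      unfolding v_def by (intro sum.cong) auto
    also note side[OF xy(1-3) eM refl refl refl refl]
    also note side[OF xy(2) xy(1) xy(3)[symmetric] eM' refl refl refl refl]
    also have "1 / (2 * (real n - 1)) *
      ((real n - 1 - real (card {z. {x,z} \<in> M})) * p x + (\<alpha> * (2 * real t) + \<beta> * (real n + 1 - 2 * real t)) - p x - p y - \<alpha> * real (card {z. {x,z} \<in> M}) +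
       ((real n - 1 - real (card {z. {y,z} \<in> M})) * p y + (\<alpha> * (2 * real t) + \<beta> * (real n + 1 - 2 * real t)) - p y - p x - \<alpha> * real (card {z. {y,z} \<in> M})))
      = (3 * real n - 7 + s) / (4 * (real n - 1)) * (p x + p y)"
      unfolding px[of x] px[of y] \<alpha>_def \<beta>_def
      by (rule alg[OF sD _ cx01 cx01]) (use n2 in simp)
    also have "p x + p y = v e" unfolding v_def xy(4) using xy(3) by simp
    finally show ?thesis unfolding mu_eq .
  qed
  have nn: "a e f \<ge> 0" for e f unfolding a_def using n2 by simp
  have sym: "a e f = a f e" for e f unfolding a_def by (auto simp: Int_commute)
  obtain e0 where e0: "e0 \<in> ?S"
  proof -
    have k1a: "{0,1} \<in> Kedges n" using n2 unfolding Kedges_def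
      by (intro CollectI exI[of _ 0] exI[of _ 1]) simp
    have k1b: "{0,2} \<in> Kedges n" using n2 unfolding Kedges_def
      by (intro CollectI exI[of _ 0] exI[of _ 2]) simp
    note k1 = k1a k1b
    have "{0,1::nat} \<notin> M \<or> {0,2::nat} \<notin> M"
    proof (rule ccontr)
      assume "\<not> ?thesis"
      hence a: "{0,1::nat} \<in> M" "{0,2::nat} \<in> M" by auto
      have "{0,1::nat} \<noteq> {0,2}" by (auto simp: doubleton_eq_iff)
      hence "{0,1::nat} \<inter> {0,2} = {}" using Mdis[rule_format, OF a] by simp
      thus False by simp
    qed
    thus ?thesis using that k1 by blast
  qed
  show ?thesis unfolding largest_eigenvalue_on_def Pa
  proof
    show "eigenvalue_on ?S (\<lambda>e f. complex_of_real (a e f)) (complex_of_real (mu_m n t))"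
      unfolding eigenvalue_on_def
    proof (intro exI[of _ "\<lambda>e. complex_of_real (v e)"] conjI ballI)
      show "\<exists>e\<in>?S. complex_of_real (v e) \<noteq> 0" using e0 vpos by force
      fix e assume "e \<in> ?S"
      have "(\<Sum>f\<in>?S. complex_of_real (a e f) * complex_of_real (v f)) = complex_of_real (\<Sum>f\<in>?S. a e f * v f)"
        by simp
      also have "\<dots> = complex_of_real (mu_m n t) * complex_of_real (v e)" using veq[OF \<open>e \<in> ?S\<close>] \<mu>_def by simp
      finally show "(\<Sum>f\<in>?S. complex_of_real (a e f) * complex_of_real (v f)) = complex_of_real (mu_m n t) * complex_of_real (v e)" .
    qed
    show "\<forall>lam. eigenvalue_on ?S (\<lambda>e f. complex_of_real (a e f)) lam \<longrightarrow> lam \<in> \<real> \<and> Re lam \<le> mu_m n t"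
    proof (intro allI impI conjI)
      fix lam assume ev: "eigenvalue_on ?S (\<lambda>e f. complex_of_real (a e f)) lam"
      show "lam \<in> \<real>" by (rule eig_real[OF finS sym ev])
      have "cmod lam \<le> \<mu>" by (rule eig_bound[OF finS nn vpos veq ev])
      thus "Re lam \<le> mu_m n t" using complex_Re_le_cmod[of lam] \<mu>_def by linarith
    qed
  qed
qed

lemma div_aux: fixes a b t f :: real assumes "a > 0" "b > 0" "f = 16*t/a/(4*b)"
  shows "f = 4*t/(b*a)" using assms by (simp add: field_simps)

lemma key_real:
  fixes n t x :: real
  assumes n2: "n \<ge> 2" and t1: "t \<ge> 1" and t2: "2*t \<le> n+1" and tx: "t \<le> x" and xt: "x - 1 \<le> t"
  defines "f \<equiv> 1 - (3*n - 7 + sqrt (n^2 + 6*n + 9 - 16*t))/(4*(n-1))"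
  shows "f > 0" "x/(4*n^2) \<le> f" "f \<le> 8*x/n^2"
    "(n+3)^2 - 16*x \<ge> 0 \<Longrightarrow> f \<le> 4*x/((n-1)*(n+3+sqrt((n+3)^2-16*x)))"
    "4*(x-1)/((n-1)*(2*(n+3))) \<le> f"
proof -
  define s where "s = sqrt (n^2 + 6*n + 9 - 16*t)"
  have D0: "n^2 + 6*n + 9 - 16*t \<ge> 0" using D_nonneg[OF t2] .
  have ss: "s^2 = n^2 + 6*n + 9 - 16*t" unfolding s_def by (rule real_sqrt_pow2[OF D0])
  have s0: "s \<ge> 0" unfolding s_def using D0 by simp
  have sup: "s \<le> n+3"
  proof -
    have "s^2 \<le> (n+3)^2" using ss t1 by (simp add: power2_eq_square algebra_simps)
    thus ?thesis using n2 power2_le_imp_le[of s "n+3"] by linarith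
  qed
  have n1: "n - 1 > 0" using n2 by simp
  have nn: "2*n \<le> n*n" using mult_right_mono[OF n2, of n] n2 by simp
  have feq: "f = 4*t/((n-1)*(n+3+s))"
  proof -
    have pr: "(n+3-s)*(n+3+s) = 16*t" using ss by (simp add: power2_eq_square algebra_simps)
    have f1: "f = (n+3-s)/(4*(n-1))" unfolding f_def s_def[symmetric] using n1 by (simp add: field_simps)
    have p: "n+3+s > 0" using s0 n2 by simp
    have "n+3-s = 16*t/(n+3+s)" using pr p by (simp add: eq_divide_eq)
    hence "f = 16*t/(n+3+s)/(4*(n-1))" using f1 by simp
    thus ?thesis using div_aux[OF p n1] by blast
  qed
  have den_pos: "(n-1)*(n+3+s) > 0" using n1 s0 n2 by simp
  show fpos: "f > 0" unfolding feq using den_pos t1 by simp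
  have den_le: "(n-1)*(n+3+s) \<le> (n-1)*(2*(n+3))" using sup n1 by (intro mult_left_mono) auto
  have f_low: "4*t/((n-1)*(2*(n+3))) \<le> f" unfolding feq
    by (rule divide_left_mono[OF den_le]) (use t1 den_pos n2 in auto)
  show "4*(x-1)/((n-1)*(2*(n+3))) \<le> f"
    using f_low xt n1 n2 by (smt (verit) divide_right_mono mult_pos_pos)
  have f_up: "f \<le> 4*t/((n-1)*(n+3))" unfolding feq
    by (rule divide_left_mono) (use t1 n1 n2 s0 in \<open>auto intro: mult_left_mono mult_pos_pos\<close>)
  show "x/(4*n^2) \<le> f"
  proof -
    have "x \<le> 2*t" using xt t1 by simp
    hence "x/(4*n^2) \<le> 2*t/(4*n^2)" by (rule divide_right_mono) simp
    also have "2*t/(4*n^2) \<le> 4*t/((n-1)*(2*(n+3)))"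
    proof -
      have e1: "(n-1)*(2*(n+3)) = 2*(n*n) + 4*n - 6" "2*(4*n^2) = 8*(n*n)" by (simp_all add: algebra_simps power2_eq_square)
      have "(n-1)*(2*(n+3)) \<le> 2*(4*n^2)" unfolding e1 using n2 nn by linarith
      hence "4*t/(2*(4*n^2)) \<le> 4*t/((n-1)*(2*(n+3)))"
        by (rule divide_left_mono) (use t1 n1 n2 in auto)
      thus ?thesis by simp
    qed
    finally show ?thesis using f_low by linarith
  qed
  show "f \<le> 8*x/n^2"
  proof -
    have "4*t/((n-1)*(n+3)) \<le> 4*x/((n-1)*(n+3))" using tx n1 n2 by (simp add: divide_right_mono)
    also have "\<dots> \<le> 4*x/(n^2/2)"
    proof (rule divide_left_mono)
      have e1: "(n-1)*(n+3) = n*n + 2*n - 3" "n^2/2 = (n*n)/2" by (simp_all add: algebra_simps power2_eq_square)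
      show "n^2/2 \<le> (n-1)*(n+3)" unfolding e1 using n2 nn by linarith
      show "0 \<le> 4*x" using tx t1 by simp
      show "0 < (n-1)*(n+3) * (n^2/2)" using n1 n2 by simp
    qed
    also have "\<dots> = 8*x/n^2" by simp
    finally show ?thesis using f_up by linarith
  qed
  assume h: "(n+3)^2 - 16*x \<ge> 0"
  have "sqrt((n+3)^2-16*x) \<le> s" unfolding s_def using tx by (simp add: power2_eq_square algebra_simps)
  hence dd: "(n-1)*(n+3+sqrt((n+3)^2-16*x)) \<le> (n-1)*(n+3+s)" using n1 by simp
  have "f \<le> 4*x/((n-1)*(n+3+s))" unfolding feq using tx den_pos by (simp add: divide_right_mono)
  also have "\<dots> \<le> 4*x/((n-1)*(n+3+sqrt((n+3)^2-16*x)))"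
  proof (rule divide_left_mono[OF dd])
    show "0 \<le> 4*x" using tx t1 by simp
    have "sqrt((n+3)^2-16*x) \<ge> 0" using h by simp
    hence "n+3+sqrt((n+3)^2-16*x) > 0" using n2 by linarith
    hence "(n-1)*(n+3+sqrt((n+3)^2-16*x)) > 0" using n1 by (rule mult_pos_pos[rotated])
    thus "0 < (n-1)*(n+3+s) * ((n-1)*(n+3+sqrt((n+3)^2-16*x)))" using den_pos by simp
  qed
  finally show "f \<le> 4*x/((n-1)*(n+3+sqrt((n+3)^2-16*x)))" .
qed

lemma lim_inv_x:
  assumes "c > 0" "\<alpha> > 0"
  shows "((\<lambda>n. 1 / (c * real n powr \<alpha>)) \<longlongrightarrow> 0) sequentially"
proof -
  have "((\<lambda>n. real n powr (-\<alpha>)) \<longlongrightarrow> 0) sequentially"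
    by (rule tendsto_neg_powr) (use assms in simp, rule filterlim_real_sequentially)
  hence "((\<lambda>n. (1/c) * real n powr (-\<alpha>)) \<longlongrightarrow> 0) sequentially" by (rule tendsto_mult_right_zero)
  moreover have "(1/c) * real n powr (-\<alpha>) = 1 / (c * real n powr \<alpha>)" for n
    by (simp add: powr_minus divide_inverse)
  ultimately show ?thesis by simp
qed

lemma lim_x_n2:
  assumes "\<alpha> < 2"
  shows "((\<lambda>n. c * real n powr \<alpha> / (real n)^2) \<longlongrightarrow> 0) sequentially"
proof -
  have "((\<lambda>n. real n powr (\<alpha> - 2)) \<longlongrightarrow> 0) sequentially"
    by (rule tendsto_neg_powr) (use assms in simp, rule filterlim_real_sequentially)
  hence "((\<lambda>n. c * real n powr (\<alpha> - 2)) \<longlongrightarrow> 0) sequentially" by (rule tendsto_mult_right_zero)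
  moreover have "eventually (\<lambda>n. c * real n powr (\<alpha> - 2) = c * real n powr \<alpha> / (real n)^2) sequentially"
    using eventually_gt_at_top[of "0::nat"]
    by eventually_elim (simp add: powr_diff powr_numeral)
  ultimately show ?thesis by (rule Lim_transform_eventually)
qed

lemma limL:
  assumes "c > 0" "\<alpha> > 0"
  shows "((\<lambda>n. (1 - 1/(c * real n powr \<alpha>)) / ((1 - 1/real n) * (1 + 3 * (1/real n)))) \<longlongrightarrow> 1) sequentially"
proof -
  have "((\<lambda>n. (1 - 1/(c * real n powr \<alpha>)) / ((1 - 1/real n) * (1 + 3 * (1/real n)))) \<longlongrightarrow>
     (1 - 0) / ((1 - 0) * (1 + 3 * 0))) sequentially"
    by (intro tendsto_intros lim_inv_x assms lim_1_over_n) simp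
  thus ?thesis by simp
qed

lemma limU:
  assumes "\<alpha> < 2"
  shows "((\<lambda>n. 2 / ((1 - 1/real n) * (1 + 3 * (1/real n) + sqrt ((1 + 3 * (1/real n))^2 - 16 * (c * real n powr \<alpha> / (real n)^2))))) \<longlongrightarrow> 1) sequentially"
proof -
  have "((\<lambda>n. 2 / ((1 - 1/real n) * (1 + 3 * (1/real n) + sqrt ((1 + 3 * (1/real n))^2 - 16 * (c * real n powr \<alpha> / (real n)^2))))) \<longlongrightarrow>
     2 / ((1 - 0) * (1 + 3 * 0 + sqrt ((1 + 3 * 0)^2 - 16 * 0)))) sequentially"
    by (intro tendsto_intros lim_x_n2 assms lim_1_over_n) simp
  thus ?thesis by simp
qed

lemma U_eq:
  fixes n x :: real
  assumes n: "n > 1" and A: "(n+3)^2 - 16*x \<ge> 0"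
  shows "2 / ((1 - 1/n) * (1 + 3 * (1/n) + sqrt ((1 + 3 * (1/n))^2 - 16 * (x / n^2))))
       = 2*n^2/((n-1)*(n+3+sqrt((n+3)^2-16*x)))"
proof -
  have "(1 + 3 * (1/n))^2 - 16 * (x / n^2) = ((n+3)^2-16*x) / n^2"
    using n by (simp add: field_simps power2_eq_square)
  hence sq: "sqrt ((1 + 3 * (1/n))^2 - 16 * (x / n^2)) = sqrt((n+3)^2-16*x) / n"
    using n by (simp add: real_sqrt_divide)
  have "(1 - 1/n) * (1 + 3 * (1/n) + sqrt((n+3)^2-16*x) / n) = (n-1)*(n+3+sqrt((n+3)^2-16*x)) / n^2"
    using n by (simp add: field_simps power2_eq_square)
  thus ?thesis unfolding sq using n by simp
qed

lemma L_eq: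
  fixes n x :: real
  assumes n: "n > 1" and x: "x > 0"
  shows "(1 - 1/x) / ((1 - 1/n) * (1 + 3 * (1/n))) = n^2*(x-1)/((n-1)*(n+3)*x)"
  using n x by (simp add: field_simps power2_eq_square)

lemma R_bounds:
  fixes n x f :: real
  assumes n: "n > 1" and x: "x > 0"
    and up: "f \<le> 4*x/((n-1)*(n+3+S))" and lo: "4*(x-1)/((n-1)*(2*(n+3))) \<le> f"
  shows "f * (n^2/(2*x)) \<le> 2*n^2/((n-1)*(n+3+S))"
    "n^2*(x-1)/((n-1)*(n+3)*x) \<le> f * (n^2/(2*x))"
proof -
  have k: "n^2/(2*x) \<ge> 0" using x by simp
  have "f * (n^2/(2*x)) \<le> 4*x/((n-1)*(n+3+S)) * (n^2/(2*x))" by (rule mult_right_mono[OF up k])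
  also have "\<dots> = 2*n^2/((n-1)*(n+3+S))" using x by (simp add: field_simps)
  finally show "f * (n^2/(2*x)) \<le> 2*n^2/((n-1)*(n+3+S))" .
  have "4*(x-1)/((n-1)*(2*(n+3))) * (n^2/(2*x)) \<le> f * (n^2/(2*x))" by (rule mult_right_mono[OF lo k])
  moreover have "4*(x-1)/((n-1)*(2*(n+3))) * (n^2/(2*x)) = n^2*(x-1)/((n-1)*(n+3)*x)"
  proof -
    have "4*(x-1)/((n-1)*(2*(n+3))) * (n^2/(2*x)) = (4*(x-1)*n^2)/(((n-1)*(2*(n+3)))*(2*x))"
      by (rule times_divide_times_eq)
    also have "\<dots> = (4*(n^2*(x-1)))/(4*((n-1)*(n+3)*x))"
      by (intro arg_cong2[where f="(/)"]) (simp_all add: algebra_simps)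
    also have "\<dots> = n^2*(x-1)/((n-1)*(n+3)*x)" by (rule mult_divide_mult_cancel_left) simp
    finally show ?thesis .
  qed
  ultimately show "n^2*(x-1)/((n-1)*(n+3)*x) \<le> f * (n^2/(2*x))" by simp
qed

theorem theorem3p4:
  fixes c \<alpha> :: real
  assumes "c > 0" and "0 \<le> \<alpha>" and "\<alpha> \<le> 1"
  defines "T \<equiv> (\<lambda>n::nat. nat \<lfloor>c * real n powr \<alpha>\<rfloor>)"
  defines "F \<equiv> inf at_top (principal {n::nat. 2 \<le> n \<and> 1 \<le> T n \<and> 2 * real (T n) \<le> real n + 1})"
  shows "(\<forall>n::nat. \<forall>M. 2 \<le> n \<longrightarrow> 1 \<le> T n \<longrightarrow> 2 * real (T n) \<le> real n + 1 \<longrightarrow>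
            is_matching n (T n) M \<longrightarrow>
            largest_eigenvalue_on (Kedges n - M) (Pmat n) (mu_m n (T n)))
       \<and> (\<lambda>n. 1 - mu_m n (T n)) \<in> \<Theta>[F](\<lambda>n. real n powr (\<alpha> - 2))
       \<and> (0 < \<alpha> \<and> \<alpha> < 1 \<longrightarrow> (\<lambda>n. 1 - mu_m n (T n)) \<sim>[F] (\<lambda>n. 2 * c * real n powr (\<alpha> - 2)))
       \<and> (\<lambda>n. 1 / (1 - mu_m n (T n))) \<in> \<Theta>[F](\<lambda>n. real n powr (2 - \<alpha>))"
proof -
  have c0: "c > 0" using assms(1) .
  let ?G = "{n::nat. 2 \<le> n \<and> 1 \<le> T n \<and> 2 * real (T n) \<le> real n + 1}"
  define x where "x n = c * real n powr \<alpha>" for n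
  define f where "f n = 1 - mu_m n (T n)" for n
  have x0: "x n \<ge> 0" for n unfolding x_def using c0 by simp
  have Tx: "real (T n) \<le> x n \<and> x n - 1 \<le> real (T n)" for n
  proof -
    have fl: "of_int \<lfloor>x n\<rfloor> \<le> x n \<and> x n < of_int (\<lfloor>x n\<rfloor> + 1)" by (rule floor_correct)
    have "\<lfloor>x n\<rfloor> \<ge> 0" using x0[of n] by simp
    hence "real (T n) = of_int \<lfloor>x n\<rfloor>" unfolding T_def x_def by simp
    thus ?thesis using fl by simp
  qed
  have kr: "f n > 0 \<and> x n/(4*(real n)^2) \<le> f n \<and> f n \<le> 8*x n/(real n)^2 \<and>
     ((real n+3)^2 - 16*x n \<ge> 0 \<longrightarrow> f n \<le> 4*x n/((real n-1)*(real n+3+sqrt((real n+3)^2-16*x n)))) \<and>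
     4*(x n-1)/((real n-1)*(2*(real n+3))) \<le> f n" if "n \<in> ?G" for n
  proof -
    have h: "real n \<ge> 2" "real (T n) \<ge> 1" "2 * real (T n) \<le> real n + 1" using that by auto
    note K = key_real[OF h Tx[of n, THEN conjunct1] Tx[of n, THEN conjunct2]]
    have fe: "f n = 1 - (3*real n - 7 + sqrt (real n^2 + 6*real n + 9 - 16*real (T n)))/(4*(real n-1))"
      unfolding f_def mu_m_def by simp
    show ?thesis unfolding fe using K by blast
  qed
  have xpos: "x n > 0" if "n \<in> ?G" for n
    unfolding x_def using that c0 by simp
  have pw: "c * real n powr (\<alpha> - 2) = x n / (real n)^2" if "n \<in> ?G" for n
    unfolding x_def using that by (simp add: powr_diff powr_numeral)
  have pw2: "real n powr (2 - \<alpha>) = (real n)^2 / (x n / c)" if "n \<in> ?G" for n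
    unfolding x_def using that c0 by (simp add: powr_diff powr_numeral)
  have evG: "eventually (\<lambda>n. n \<in> ?G) F" unfolding F_def eventually_inf_principal by simp
  have Fle: "F \<le> at_top" unfolding F_def by simp
  have P1: "\<forall>n::nat. \<forall>M. 2 \<le> n \<longrightarrow> 1 \<le> T n \<longrightarrow> 2 * real (T n) \<le> real n + 1 \<longrightarrow>
            is_matching n (T n) M \<longrightarrow>
            largest_eigenvalue_on (Kedges n - M) (Pmat n) (mu_m n (T n))"
    using eigen_main by blast
  have P2: "f \<in> \<Theta>[F](\<lambda>n. real n powr (\<alpha> - 2))"
  proof (rule bigthetaI'[of "c/4" "8*c"])
    show "c/4 > 0" "8*c > 0" using c0 by auto
    show "\<forall>\<^sub>F n in F. c/4 * norm (real n powr (\<alpha> - 2)) \<le> norm (f n) \<and> norm (f n) \<le> 8*c * norm (real n powr (\<alpha> - 2))"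
      using evG
    proof eventually_elim
      case (elim n)
      note K = kr[OF elim]
      have "c/4 * norm (real n powr (\<alpha> - 2)) = (c * real n powr (\<alpha> - 2)) / 4" by simp
      also have "\<dots> = x n/(4*(real n)^2)" using pw[OF elim] by simp
      finally have a: "c/4 * norm (real n powr (\<alpha> - 2)) = x n/(4*(real n)^2)" .
      have "8*c * norm (real n powr (\<alpha> - 2)) = 8 * (c * real n powr (\<alpha> - 2))" by simp
      also have "\<dots> = 8*x n/(real n)^2" using pw[OF elim] by simp
      finally have b: "8*c * norm (real n powr (\<alpha> - 2)) = 8*x n/(real n)^2" .
      show ?case unfolding a b using K by simp
    qed
  qed
  have P4: "(\<lambda>n. 1 / f n) \<in> \<Theta>[F](\<lambda>n. real n powr (2 - \<alpha>))"
  proof (rule bigthetaI'[of "1/(8*c)" "4/c"])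
    show "1/(8*c) > 0" "4/c > 0" using c0 by auto
    show "\<forall>\<^sub>F n in F. 1/(8*c) * norm (real n powr (2 - \<alpha>)) \<le> norm (1 / f n) \<and> norm (1 / f n) \<le> 4/c * norm (real n powr (2 - \<alpha>))"
      using evG
    proof eventually_elim
      case (elim n)
      note K = kr[OF elim]
      have xp: "x n > 0" by (rule xpos[OF elim])
      have n0: "real n > 0" using elim by simp
      have a: "1/(8*c) * norm (real n powr (2 - \<alpha>)) = 1 / (8*x n/(real n)^2)"
        unfolding pw2[OF elim] using c0 xp by simp
      have b: "4/c * norm (real n powr (2 - \<alpha>)) = 1 / (x n/(4*(real n)^2))"
        unfolding pw2[OF elim] using c0 xp by simp
      have f0: "f n > 0" using K by simp
      have "1 / (8*x n/(real n)^2) \<le> 1 / f n"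
        by (rule divide_left_mono) (use K f0 xp n0 in auto)
      moreover have "1 / f n \<le> 1 / (x n/(4*(real n)^2))"
        by (rule divide_left_mono) (use K f0 xp n0 in auto)
      ultimately show ?case unfolding a b using f0 by simp
    qed
  qed
  have P3: "0 < \<alpha> \<and> \<alpha> < 1 \<longrightarrow> f \<sim>[F] (\<lambda>n. 2 * c * real n powr (\<alpha> - 2))"
  proof
    assume a: "0 < \<alpha> \<and> \<alpha> < 1"
    define L where "L n = (1 - 1/(c * real n powr \<alpha>)) / ((1 - 1/real n) * (1 + 3 * (1/real n)))" for n
    define U where "U n = 2 / ((1 - 1/real n) * (1 + 3 * (1/real n) + sqrt ((1 + 3 * (1/real n))^2 - 16 * (c * real n powr \<alpha> / (real n)^2))))" for n
    have limL': "(L \<longlongrightarrow> 1) F" unfolding L_def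
      by (rule tendsto_mono[OF Fle]) (rule limL[OF c0], use a in simp)
    have limU': "(U \<longlongrightarrow> 1) F" unfolding U_def
      by (rule tendsto_mono[OF Fle]) (rule limU, use a in simp)
    have ev5: "eventually (\<lambda>n. n \<ge> 5) F" using Fle eventually_ge_at_top[of "5::nat"] by (rule filter_leD)
    have bnds: "eventually (\<lambda>n. L n \<le> f n / (2 * c * real n powr (\<alpha> - 2)) \<and> f n / (2 * c * real n powr (\<alpha> - 2)) \<le> U n) F"
      using evG ev5
    proof eventually_elim
      case (elim n)
      note K = kr[OF elim(1)]
      have xp: "x n > 0" by (rule xpos[OF elim(1)])
      have n1: "real n > 1" using elim by simp
      have R: "f n / (2 * c * real n powr (\<alpha> - 2)) = f n * ((real n)^2/(2*x n))"
      proof -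
        have "2 * c * real n powr (\<alpha> - 2) = 2 * (x n / (real n)^2)" using pw[OF elim(1)] by simp
        thus ?thesis using xp n1 by simp
      qed
      have A: "(real n+3)^2 - 16*x n \<ge> 0"
      proof -
        have "x n \<le> (real n + 3)/2" using Tx[of n] elim by simp
        moreover have "8*(real n + 3) \<le> (real n+3)*(real n+3)" using elim by (intro mult_right_mono) auto
        ultimately show ?thesis by (simp add: power2_eq_square)
      qed
      have xe: "x n = c * real n powr \<alpha>" unfolding x_def ..
      have Ue: "U n = 2*(real n)^2/((real n-1)*(real n+3+sqrt((real n+3)^2-16*x n)))"
        unfolding U_def xe[symmetric] by (rule U_eq[OF n1 A])
      have Le: "L n = (real n)^2*(x n-1)/((real n-1)*(real n+3)*x n)"
        unfolding L_def xe[symmetric] by (rule L_eq[OF n1 xp])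
      have up: "f n \<le> 4*x n/((real n-1)*(real n+3+sqrt((real n+3)^2-16*x n)))" using K A by blast
      have lo: "4*(x n-1)/((real n-1)*(2*(real n+3))) \<le> f n" using K by blast
      show ?case unfolding R Ue Le using R_bounds[OF n1 xp up lo] by simp
    qed
    have "((\<lambda>n. f n / (2 * c * real n powr (\<alpha> - 2))) \<longlongrightarrow> 1) F"
      by (rule tendsto_sandwich[OF _ _ limL' limU']) (use bnds in \<open>auto elim: eventually_mono\<close>)
    thus "f \<sim>[F] (\<lambda>n. 2 * c * real n powr (\<alpha> - 2))" by (rule asymp_equivI')
  qed
  show ?thesis using P1 P2 P3 P4 unfolding f_def by blast
qed

end
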